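(* Let $1 \leqslant k \leqslant n$ be integers. Let $\mathcal{C}$ be the set of all chains in $\{0,1\}^n$ of length exactly $k+1$, together with all symmetric chains in $\{0,1\}^n$ of length less than $k+1$ (chains, length and symmetry as defined in the context). Suppose there exist strictly positive real weights $w_\gamma > 0$, one for each $\gamma \in \mathcal{C}$, such that for every $x \in \{0,1\}^n$ $$\sum_{\gamma \in \mathcal{C} :\, x \in \gamma} w_\gamma = 1.$$ Call $A \subseteq \{0,1\}^n$ admissible if there are no two distinct $x, y \in A$ with $x_i \leqslant y_i$ for all $i$ and $x_i < y_i$ for at most $k$ coordinates $i$. Then: if $n$ is even, the set $B = \{x \in \{0,1\}^n : |x| \equiv \tfrac{n}{2} \pmod{k+1}\}$ is the unique admissible set of maximum cardinality; if $n$ is odd, the sets $B_1 = \{x : |x| \equiv \lfloor \tfrac{n}{2} \rfloor \pmod{k+1}\}$ and $B_2 = \{x : |x| \equiv \lceil \tfrac{n}{2} \rceil \pmod{k+1}\}$ are admissible sets of maximum cardinality and are the only ones.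
   Context: For $x \in \{0,1\}^n$, $|x|$ denotes the number of coordinates equal to $1$, and the layer $L_m$ is $\{x : |x| = m\}$. For $x, y \in \{0,1\}^n$ write $x \prec y$ if there is a coordinate $j$ with $x_i = y_i$ for all $i \neq j$, $x_j = 0$ and $y_j = 1$. A chain is an ordered tuple $(x_1, \dots, x_l)$ of elements of $\{0,1\}^n$ with $x_1 \prec x_2 \prec \dots \prec x_l$ (a single element is a chain); its length is $l$. If $x_1 \in L_m$ then $x_l \in L_{m+l-1}$, and the chain is called symmetric if $\frac{m + (m+l-1)}{2} = \frac{n}{2}$. Writing $x \in \gamma$ means $x$ is one of the entries of the chain $\gamma$. *)

theory Defs
  imports Complex_Main
begin

text \<open>Elements of {0,1}^n are bool lists of length n (True = coordinate 1).\<close>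

definition cube :: "nat \<Rightarrow> bool list set" where
  "cube n = {x. length x = n}"

definition weight :: "bool list \<Rightarrow> nat" where
  "weight x = length (filter id x)"

definition covers :: "bool list \<Rightarrow> bool list \<Rightarrow> bool" where
  "covers x y \<longleftrightarrow> length x = length y \<and>
     (\<exists>j < length x. \<not> x ! j \<and> y ! j \<and> (\<forall>i < length x. i \<noteq> j \<longrightarrow> x ! i = y ! i))"

text \<open>A chain in {0,1}^n: nonempty tuple x_1 \<prec> ... \<prec> x_l; its length is the length of the list.\<close>
definition is_chain :: "nat \<Rightarrow> bool list list \<Rightarrow> bool" where
  "is_chain n c \<longleftrightarrow> c \<noteq> [] \<and> set c \<subseteq> cube n \<and>
     (\<forall>i. Suc i < length c \<longrightarrow> covers (c ! i) (c ! Suc i))"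

text \<open>Symmetric: (m + (m + l - 1))/2 = n/2 with m = |x_1|, l = length.\<close>
definition symmetric_chain :: "nat \<Rightarrow> bool list list \<Rightarrow> bool" where
  "symmetric_chain n c \<longleftrightarrow> is_chain n c \<and>
     weight (hd c) + (weight (hd c) + length c - 1) = n"

definition chain_family :: "nat \<Rightarrow> nat \<Rightarrow> bool list list set" where
  "chain_family n k = {c. is_chain n c \<and> length c = k + 1}
                    \<union> {c. symmetric_chain n c \<and> length c < k + 1}"

definition admissible :: "nat \<Rightarrow> nat \<Rightarrow> bool list set \<Rightarrow> bool" where
  "admissible n k A \<longleftrightarrow> A \<subseteq> cube n \<and>
     \<not> (\<exists>x\<in>A. \<exists>y\<in>A. x \<noteq> y \<and> (\<forall>i<n. x ! i \<le> y ! i)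
            \<and> card {i. i < n \<and> x ! i < y ! i} \<le> k)"

end

theory Submission imports Defs begin

lemma weight_card: "weight x = card {i. i < length x \<and> x ! i}"
  unfolding weight_def by (simp add: length_filter_conv_card)

lemma weight_le_length: "weight x \<le> length x"
  unfolding weight_def by simp

lemma succ_nth: "successively P c \<Longrightarrow> Suc i < length c \<Longrightarrow> P (c!i) (c!Suc i)"
proof (induction P c arbitrary: i rule: successively.induct)
  case (3 P x y xs)
  then show ?case by (cases i) auto
qed auto

lemma is_chain_succ: "c \<noteq> [] \<Longrightarrow> set c \<subseteq> cube n \<Longrightarrow> successively covers c \<Longrightarrow> is_chain n c"
  unfolding is_chain_def using succ_nth by blast

lemma covers_intro:
  assumes "length x = length y" "j < length x" "\<not> x!j" "y!j" "\<forall>l<length x. l \<noteq> j \<longrightarrow> x!l = y!l"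
  shows "covers x y"
  using assms unfolding covers_def by blast

lemma covers_weight: assumes "covers x y" shows "weight y = Suc (weight x)"
proof -
  obtain j where j: "j < length x" "\<not> x!j" "y!j" "\<forall>i<length x. i \<noteq> j \<longrightarrow> x!i = y!i"
    and len: "length x = length y"
    using assms unfolding covers_def by blast
  have "{i. i < length y \<and> y ! i} = insert j {i. i < length x \<and> x ! i}"
    using j len by auto
  then show ?thesis using j by (simp add: weight_card)
qed

lemma covers_le: "covers x y \<Longrightarrow> l < length x \<Longrightarrow> x!l \<le> y!l"
  unfolding covers_def by (metis le_boolI)

lemma covers_len: "covers x y \<Longrightarrow> length x = length y"
  unfolding covers_def by blast

lemma chain_weight: "is_chain n c \<Longrightarrow> i < length c \<Longrightarrow> weight (c!i) = weight (hd c) + i"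
proof (induction i)
  case 0
  then show ?case unfolding is_chain_def by (simp add: hd_conv_nth)
next
  case (Suc i)
  then show ?case using covers_weight unfolding is_chain_def by fastforce
qed

lemma chain_in: "is_chain n c \<Longrightarrow> i < length c \<Longrightarrow> c!i \<in> cube n"
  unfolding is_chain_def by auto

lemma chain_distinct: assumes "is_chain n c" shows "distinct c"
proof -
  have "\<forall>i<length c. \<forall>j<length c. i \<noteq> j \<longrightarrow> c!i \<noteq> c!j"
  proof (intro allI impI)
    fix i j assume "i < length c" "j < length c" "i \<noteq> j"
    then have "weight (c!i) \<noteq> weight (c!j)" using chain_weight[OF assms] by simp
    then show "c!i \<noteq> c!j" by metis
  qed
  then show ?thesis by (simp add: distinct_conv_nth)
qed

lemma chain_le: assumes "is_chain n c" "i \<le> j" "j < length c" "l < n"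
  shows "c!i!l \<le> c!j!l"
  using assms(2,3)
proof (induction j)
  case 0 then show ?case by simp
next
  case (Suc j)
  show ?case
  proof (cases "i = Suc j")
    case False
    then have "c!i!l \<le> c!j!l" using Suc by simp
    moreover have "covers (c!j) (c!Suc j)" using assms(1) Suc.prems unfolding is_chain_def by blast
    moreover have "length (c!j) = n" using chain_in[OF assms(1), of j] Suc.prems by (simp add: cube_def)
    ultimately show ?thesis using covers_le assms(4) by (metis order_trans)
  qed simp
qed

lemma le_weight:
  assumes "length x = n" "length y = n" "\<forall>i<n. x!i \<le> y!i"
  shows "weight y = weight x + card {i. i < n \<and> x!i < y!i}"
proof -
  have "{i. i < n \<and> y!i} = {i. i < n \<and> x!i} \<union> {i. i < n \<and> x!i < y!i}"
    using assms(3) by (auto simp: less_bool_def le_bool_def)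
  moreover have "{i. i < n \<and> x!i} \<inter> {i. i < n \<and> x!i < y!i} = {}"
    by (auto simp: less_bool_def)
  ultimately show ?thesis using assms by (simp add: weight_card card_Un_disjoint)
qed

lemma le_eq:
  assumes "length x = n" "length y = n" "\<forall>i<n. x!i \<le> y!i" "weight x = weight y"
  shows "x = y"
proof -
  have "card {i. i < n \<and> x!i < y!i} = 0" using le_weight[OF assms(1-3)] assms(4) by simp
  then have "{i. i < n \<and> x!i < y!i} = {}" by simp
  then have "\<forall>i<n. x!i = y!i" using assms(3) by (auto simp: less_bool_def le_bool_def)
  then show ?thesis using assms(1,2) by (simp add: nth_equalityI)
qed

lemma finite_cube: "finite (cube n)"
proof -
  have "cube n = {xs. set xs \<subseteq> UNIV \<and> length xs = n}" by (auto simp: cube_def)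
  then show ?thesis using finite_lists_length_eq[of "UNIV :: bool set" n] by simp
qed

lemma finite_family: "finite (chain_family n k)"
proof -
  have "chain_family n k \<subseteq> {xs. set xs \<subseteq> cube n \<and> length xs \<le> k+1}"
    by (auto simp: chain_family_def symmetric_chain_def is_chain_def)
  then show ?thesis using finite_lists_length_le[OF finite_cube] finite_subset by blast
qed

lemma card_inter_chain:
  assumes "is_chain n c"
  shows "card (S \<inter> set c) = card {i. i < length c \<and> c!i \<in> S}"
proof -
  have d: "distinct c" using chain_distinct[OF assms] .
  have "S \<inter> set c = set (filter (\<lambda>x. x \<in> S) c)" by auto
  then have "card (S \<inter> set c) = length (filter (\<lambda>x. x \<in> S) c)"
    using d by (metis distinct_card distinct_filter)
  then show ?thesis by (simp add: length_filter_conv_card)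
qed


lemma weight_upd_T: "j < length x \<Longrightarrow> \<not> x!j \<Longrightarrow> weight (x[j:=True]) = Suc (weight x)"
  by (rule covers_weight, rule covers_intro) auto

lemma weight_upd_F: "j < length x \<Longrightarrow> x!j \<Longrightarrow> weight (x[j:=False]) = weight x - 1"
proof -
  assume a: "j < length x" "x!j"
  have "covers (x[j:=False]) x" by (rule covers_intro) (use a in auto)
  from covers_weight[OF this] show ?thesis by simp
qed

lemma exists_F: "length x = n \<Longrightarrow> weight x < n \<Longrightarrow> \<exists>j<n. \<not> x!j"
proof (rule ccontr)
  assume a: "length x = n" "weight x < n" "\<not> (\<exists>j<n. \<not> x!j)"
  then have "{i. i < length x \<and> x!i} = {..<n}" by auto
  then show False using a by (simp add: weight_card)
qed

lemma exists_T: "weight x > 0 \<Longrightarrow> \<exists>j<length x. x!j"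
proof (rule ccontr)
  assume a: "weight x > 0" "\<not> (\<exists>j<length x. x!j)"
  then have "{i. i < length x \<and> x!i} = {}" by auto
  then show False using a by (simp only: weight_card) simp
qed

lemma chain_last_weight: "is_chain n c \<Longrightarrow> weight (last c) = weight (hd c) + length c - 1"
  using chain_weight[of n c "length c - 1"] by (cases c) (auto simp: is_chain_def last_conv_nth)

lemma nth_succ: "(\<forall>i. Suc i < length c \<longrightarrow> P (c!i) (c!Suc i)) \<Longrightarrow> successively P c"
proof (induction c)
  case (Cons a c)
  have "\<forall>i. Suc i < length c \<longrightarrow> P (c!i) (c!Suc i)"
    using Cons.prems by (metis Suc_less_eq length_Cons nth_Cons_Suc)
  then have "successively P c" using Cons.IH by blast
  moreover have "c \<noteq> [] \<Longrightarrow> P a (hd c)" using Cons.prems[rule_format, of 0] by (cases c) auto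
  ultimately show ?case by (auto simp: successively_Cons)
qed simp

lemma chain_up:
  assumes "x \<in> cube n" "weight x + m \<le> n"
  shows "\<exists>c. is_chain n c \<and> length c = Suc m \<and> hd c = x"
  using assms(2)
proof (induction m)
  case 0
  have "is_chain n [x]" using assms(1) by (simp add: is_chain_def)
  then show ?case by auto
next
  case (Suc m)
  then obtain c where c: "is_chain n c" "length c = Suc m" "hd c = x" by auto
  have lc: "last c \<in> cube n" using c by (auto simp: is_chain_def)
  have wl: "weight (last c) = weight x + m" using chain_last_weight[OF c(1)] c by simp
  obtain j where j: "j < n" "\<not> last c ! j" using exists_F[of "last c" n] lc wl Suc.prems
    by (auto simp: cube_def)
  let ?y = "(last c)[j:=True]"
  have cov: "covers (last c) ?y" by (rule covers_intro) (use j lc in \<open>auto simp: cube_def\<close>)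
  have "is_chain n (c @ [?y])"
  proof (rule is_chain_succ)
    show "set (c @ [?y]) \<subseteq> cube n" using c(1) lc by (auto simp: is_chain_def cube_def)
    have "successively covers c" using c(1) unfolding is_chain_def by (simp add: nth_succ)
    then show "successively covers (c @ [?y])" using cov by (simp add: successively_append_iff)
  qed simp
  moreover have "hd (c @ [?y]) = x" using c by (cases c) auto
  ultimately show ?case using c by (intro exI[of _ "c @ [?y]"]) auto
qed


lemma chain_succ: "is_chain n c \<Longrightarrow> successively covers c"
  unfolding is_chain_def by (simp add: nth_succ)

lemma chain_down:
  assumes "x \<in> cube n" "m \<le> weight x"
  shows "\<exists>c. is_chain n c \<and> length c = Suc m \<and> last c = x"
  using assms(2)
proof (induction m)
  case 0
  have "is_chain n [x]" using assms(1) by (simp add: is_chain_def)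
  then show ?case by auto
next
  case (Suc m)
  then obtain c where c: "is_chain n c" "length c = Suc m" "last c = x" by auto
  have lc: "hd c \<in> cube n" using c by (auto simp: is_chain_def)
  have wl: "weight x = weight (hd c) + m" using chain_last_weight[OF c(1)] c by simp
  obtain j where j: "j < length (hd c)" "hd c ! j" using exists_T[of "hd c"] wl Suc.prems
    by auto
  let ?y = "(hd c)[j:=False]"
  have cov: "covers ?y (hd c)" by (rule covers_intro) (use j lc in \<open>auto simp: cube_def\<close>)
  have "is_chain n (?y # c)"
  proof (rule is_chain_succ)
    show "set (?y # c) \<subseteq> cube n" using c(1) lc by (auto simp: is_chain_def cube_def)
    show "successively covers (?y # c)" using cov chain_succ[OF c(1)] by (simp add: successively_Cons)
  qed simp
  moreover have "last (?y # c) = x" using c by (cases c) auto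
  ultimately show ?case using c by (intro exI[of _ "?y # c"]) auto
qed

lemma chain_mid:
  assumes "D = [] \<or> (is_chain n D \<and> covers (last D) a)"
    "U = [] \<or> (is_chain n U \<and> covers a (hd U))" "a \<in> cube n"
  shows "is_chain n (D @ a # U)"
proof (rule is_chain_succ)
  show "set (D @ a # U) \<subseteq> cube n" using assms by (auto simp: is_chain_def)
  have "successively covers (a # U)" using assms(2) chain_succ
    by (auto simp: successively_Cons)
  then show "successively covers (D @ a # U)" using assms(1) chain_succ
    by (auto simp: successively_append_iff)
qed simp

definition elem :: "nat \<Rightarrow> nat \<Rightarrow> bool list" where
  "elem n v = replicate v True @ replicate (n - v) False"

lemma elem_props: "v \<le> n \<Longrightarrow> elem n v \<in> cube n \<and> weight (elem n v) = v"
  by (simp add: elem_def cube_def weight_def)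


lemma card_ins: "x \<notin> R \<Longrightarrow> finite R \<Longrightarrow> card (A \<inter> insert x R) = card (A \<inter> R) + (if x \<in> A then 1 else 0)"
proof (cases "x \<in> A")
  case True
  assume "x \<notin> R" "finite R"
  then have "A \<inter> insert x R = insert x (A \<inter> R)" using True by auto
  then show ?thesis using \<open>x \<notin> R\<close> \<open>finite R\<close> True by simp
next
  case False
  then have "A \<inter> insert x R = A \<inter> R" by auto
  then show ?thesis using False by simp
qed

lemma swap:
  assumes hit: "\<forall>c\<in>chain_family n k. card (A \<inter> set c) = 1" and kn: "k \<le> n"
    and a: "a \<in> cube n" "i < n" "j < n" "a!i" "\<not> a!j"
  shows "a \<in> A \<longleftrightarrow> a[i:=False, j:=True] \<in> A"
proof -
  define v where "v = weight a"
  define b where "b = a[i:=False]"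
  define t where "t = a[j:=True]"
  define a' where "a' = a[i:=False, j:=True]"
  have la: "length a = n" using a by (simp add: cube_def)
  have ij: "i \<noteq> j" using a by auto
  have v1: "v \<ge> 1" "v < n"
  proof -
    have "weight b = v - 1" unfolding b_def v_def using weight_upd_F[of i a] a la by simp
    have "covers b a" unfolding b_def by (rule covers_intro[of _ _ i]) (use a la in auto)
    then show "v \<ge> 1" using covers_weight unfolding v_def by fastforce
    have "covers a t" unfolding t_def by (rule covers_intro[of _ _ j]) (use a la in auto)
    then have "weight t = Suc v" using covers_weight unfolding v_def by blast
    moreover have "weight t \<le> n" using weight_le_length[of t] la by (simp add: t_def)
    ultimately show "v < n" by simp
  qed
  have cba: "covers b a" unfolding b_def by (rule covers_intro[of _ _ i]) (use a la in auto)
  have cba': "covers b a'" unfolding b_def a'_def by (rule covers_intro[of _ _ j]) (use a la ij in auto)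
  have cat: "covers a t" unfolding t_def by (rule covers_intro[of _ _ j]) (use a la in auto)
  have ca't: "covers a' t" unfolding t_def a'_def by (rule covers_intro[of _ _ i]) (use a la ij in \<open>auto simp: nth_list_update\<close>)
  have wb: "weight b = v - 1" using covers_weight[OF cba] v_def by simp
  have wt: "weight t = v + 1" using covers_weight[OF cat] v_def by simp
  have bc: "b \<in> cube n" and tc: "t \<in> cube n" and a'c: "a' \<in> cube n"
    using la by (auto simp: b_def t_def a'_def cube_def)
  define p where "p = min v k"
  have kp: "p \<le> k" by (simp add: p_def)
  obtain D where D: "D = [] \<or> (is_chain n D \<and> last D = b)" "length D = p"
  proof (cases "p = 0")
    case True then show ?thesis using that by auto
  next
    case False
    have "p - 1 \<le> weight b" using wb by (simp add: p_def)
    then obtain D where "is_chain n D" "length D = Suc (p - 1)" "last D = b"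
      using chain_down[OF bc, of "p - 1"] by blast
    then show ?thesis using that False by auto
  qed
  obtain U where U: "U = [] \<or> (is_chain n U \<and> hd U = t)" "length U = k - p"
  proof (cases "p = k")
    case True then show ?thesis using that by auto
  next
    case False
    have "weight t + (k - p - 1) \<le> n" using wt kn v1 False by (simp add: p_def)
    then obtain U where "is_chain n U" "length U = Suc (k - p - 1)" "hd U = t"
      using chain_up[OF tc, of "k - p - 1"] by blast
    moreover have "Suc (k - p - 1) = k - p" using False kp by simp
    ultimately show ?thesis using that by auto
  qed
  have ch: "is_chain n (D @ a # U)" "is_chain n (D @ a' # U)"
    using D U cba cba' cat ca't a a'c by (auto intro!: chain_mid)
  have len: "length (D @ a # U) = k + 1" "length (D @ a' # U) = k + 1"
    using D U kp by auto
  have inC: "D @ a # U \<in> chain_family n k" "D @ a' # U \<in> chain_family n k"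
    using ch len by (auto simp: chain_family_def)
  have d1: "a \<notin> set D \<union> set U" using chain_distinct[OF ch(1)] by auto
  have d2: "a' \<notin> set D \<union> set U" using chain_distinct[OF ch(2)] by auto
  have "card (A \<inter> insert a (set D \<union> set U)) = 1" "card (A \<inter> insert a' (set D \<union> set U)) = 1"
    using hit inC by auto
  then show ?thesis using card_ins[OF d1] card_ins[OF d2] unfolding a'_def
    by (auto split: if_splits)
qed


lemma level:
  assumes hit: "\<forall>c\<in>chain_family n k. card (A \<inter> set c) = 1" and kn: "k \<le> n"
  shows "x \<in> cube n \<Longrightarrow> y \<in> cube n \<Longrightarrow> weight x = weight y \<Longrightarrow> (x \<in> A \<longleftrightarrow> y \<in> A)"
proof (induction "card {l. l < n \<and> x!l \<and> \<not> y!l}" arbitrary: x)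
  case 0
  have "{l. l < n \<and> x!l \<and> \<not> y!l} = {}" using 0 by simp
  then have "\<forall>l<n. x!l \<le> y!l" by auto
  then have "x = y" using le_eq[of x n y] 0 by (simp add: cube_def)
  then show ?case by simp
next
  case (Suc d)
  then have "{l. l < n \<and> x!l \<and> \<not> y!l} \<noteq> {}" by (metis card.empty nat.distinct(1))
  then obtain i where i: "i < n" "x!i" "\<not> y!i" by auto
  obtain j where j: "j < n" "\<not> x!j" "y!j"
  proof (rule ccontr)
    assume "\<not> thesis"
    then have "\<forall>l<n. y!l \<le> x!l" using that by auto
    then have "y = x" using le_eq[of y n x] Suc.prems by (simp add: cube_def)
    then show False using i by simp
  qed
  have lx: "length x = n" using Suc.prems by (simp add: cube_def)
  define x' where "x' = x[i:=False, j:=True]"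
  have x'c: "x' \<in> cube n" using lx by (simp add: x'_def cube_def)
  have "weight (x[i:=False]) = weight x - 1" using weight_upd_F[of i x] i lx by simp
  moreover have "weight (x[i:=False, j:=True]) = Suc (weight (x[i:=False]))"
    using weight_upd_T[of j "x[i:=False]"] j lx i by (auto simp: nth_list_update)
  moreover have "weight x \<ge> 1"
  proof -
    have "{l. l < length x \<and> x!l} \<noteq> {}" using i lx by auto
    then have "card {l. l < length x \<and> x!l} > 0" by (simp add: card_gt_0_iff)
    then show ?thesis by (simp add: weight_card)
  qed
  ultimately have wx': "weight x' = weight y" using Suc.prems by (simp add: x'_def)
  have "{l. l < n \<and> x'!l \<and> \<not> y!l} = {l. l < n \<and> x!l \<and> \<not> y!l} - {i}"
    using i j lx by (auto simp: x'_def nth_list_update)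
  then have "card {l. l < n \<and> x'!l \<and> \<not> y!l} = d" using Suc.hyps(2) i by simp
  then have "x' \<in> A \<longleftrightarrow> y \<in> A" using Suc.hyps(1) x'c Suc.prems wx' by blast
  moreover have "x \<in> A \<longleftrightarrow> x' \<in> A" unfolding x'_def
    by (rule swap[OF hit kn]) (use Suc.prems i j in auto)
  ultimately show ?case by simp
qed


lemma window:
  fixes P :: "nat \<Rightarrow> bool"
  assumes kn: "k \<le> n" and W: "\<forall>s. s + k \<le> n \<longrightarrow> card {u. s \<le> u \<and> u \<le> s+k \<and> P u} = 1"
  shows "\<exists>r\<le>k. \<forall>v\<le>n. P v \<longleftrightarrow> v mod (k+1) = r"
proof -
  have "card {u. 0 \<le> u \<and> u \<le> 0+k \<and> P u} = 1" using W[rule_format, of 0] kn by simp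
  then obtain r where r: "{u. 0 \<le> u \<and> u \<le> 0+k \<and> P u} = {r}" by (meson card_1_singletonE)
  then have rk: "r \<le> k" by auto
  have "\<forall>v. v \<le> n \<longrightarrow> (P v \<longleftrightarrow> v mod (k+1) = r)"
  proof (intro allI)
    fix v show "v \<le> n \<longrightarrow> (P v \<longleftrightarrow> v mod (k+1) = r)"
    proof (induction v rule: less_induct)
      case (less v)
      show ?case
      proof (cases "v \<le> k")
        case True
        then have "P v \<longleftrightarrow> v \<in> {r}" using r by auto
        then show ?thesis using True by simp
      next
        case False
        define s where "s = v - k - 1"
        have sv: "s + k + 1 = v" using False by (simp add: s_def)
        show ?thesis
        proof
          assume vn: "v \<le> n"
          define M where "M = {u. s+1 \<le> u \<and> u \<le> s+k \<and> P u}"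
          have fM: "finite M" by (simp add: M_def)
          have e1: "{u. s \<le> u \<and> u \<le> s+k \<and> P u} = M \<union> (if P s then {s} else {})"
            by (auto simp: M_def) (metis le_antisym not_less_eq_eq)
          have e2: "{u. (s+1) \<le> u \<and> u \<le> (s+1)+k \<and> P u} = M \<union> (if P v then {v} else {})"
            using sv by (auto simp: M_def) (metis le_SucE)
          have c1: "card (M \<union> (if P s then {s} else {})) = 1" using W e1 sv vn by (metis add_leD1)
          have c2: "card (M \<union> (if P v then {v} else {})) = 1" using W e2 sv vn by (metis add.commute add.left_commute)
          have "s \<notin> M" "v \<notin> M" using sv by (auto simp: M_def)
          then have "P s \<longleftrightarrow> P v" using c1 c2 fM by (auto split: if_splits)
          moreover have "s mod (k+1) = v mod (k+1)" using sv
            by (metis add.assoc mod_add_self2)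
          moreover have "P s \<longleftrightarrow> s mod (k+1) = r" using less.IH[of s] sv vn by simp
          ultimately show "P v \<longleftrightarrow> v mod (k+1) = r" by simp
        qed
      qed
    qed
  qed
  then show ?thesis using rk by blast
qed

lemma window_card:
  assumes hit: "\<forall>c\<in>chain_family n k. card (A \<inter> set c) = 1" and kn: "k \<le> n"
    and sk: "s + k \<le> n"
  shows "card {u. s \<le> u \<and> u \<le> s+k \<and> elem n u \<in> A} = 1"
proof -
  have ec: "elem n s \<in> cube n" "weight (elem n s) = s" using elem_props[of s n] sk by auto
  obtain c where c: "is_chain n c" "length c = Suc k" "hd c = elem n s"
    using chain_up[OF ec(1), of k] ec sk by auto
  have "c \<in> chain_family n k" using c by (simp add: chain_family_def)
  then have "card (A \<inter> set c) = 1" using hit by blast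
  then have 1: "card {i. i < k+1 \<and> c!i \<in> A} = 1" using card_inter_chain[OF c(1)] c by simp
  have "\<And>i. i < k+1 \<Longrightarrow> c!i \<in> A \<longleftrightarrow> elem n (s+i) \<in> A"
  proof -
    fix i assume i: "i < k+1"
    have ci: "c!i \<in> cube n" using chain_in[OF c(1)] c i by simp
    have w: "weight (c!i) = s + i" using chain_weight[OF c(1)] c ec i by simp
    have "s + i \<le> n" using i sk by simp
    then show "c!i \<in> A \<longleftrightarrow> elem n (s+i) \<in> A"
      using level[OF hit kn ci, of "elem n (s+i)"] elem_props[of "s+i" n] w by simp
  qed
  then have "{i. i < k+1 \<and> c!i \<in> A} = {i. i < k+1 \<and> elem n (s+i) \<in> A}" by auto
  moreover have "{u. s \<le> u \<and> u \<le> s+k \<and> elem n u \<in> A} = (\<lambda>i. s+i) ` {i. i < k+1 \<and> elem n (s+i) \<in> A}"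
  proof (rule set_eqI, rule iffI)
    fix x assume "x \<in> {u. s \<le> u \<and> u \<le> s+k \<and> elem n u \<in> A}"
    then show "x \<in> (\<lambda>i. s+i) ` {i. i < k+1 \<and> elem n (s+i) \<in> A}"
      by (auto simp: image_iff intro!: exI[of _ "x - s"])
  qed auto
  moreover have "inj_on (\<lambda>i. s+i) X" for X by (simp add: inj_on_def)
  ultimately show ?thesis using 1 by (simp add: card_image)
qed


lemma struct:
  assumes sub: "A \<subseteq> cube n" and hit: "\<forall>c\<in>chain_family n k. card (A \<inter> set c) = 1" and kn: "k \<le> n"
  shows "\<exists>r\<le>k. A = {x\<in>cube n. weight x mod (k+1) = r}"
proof -
  obtain r where r: "r \<le> k" "\<forall>v\<le>n. elem n v \<in> A \<longleftrightarrow> v mod (k+1) = r"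
    using window[OF kn, of "\<lambda>u. elem n u \<in> A"] window_card[OF hit kn] by blast
  have "\<And>x. x \<in> cube n \<Longrightarrow> x \<in> A \<longleftrightarrow> weight x mod (k+1) = r"
  proof -
    fix x assume x: "x \<in> cube n"
    have wn: "weight x \<le> n" using weight_le_length[of x] x by (simp add: cube_def)
    then have "x \<in> A \<longleftrightarrow> elem n (weight x) \<in> A"
      using level[OF hit kn x, of "elem n (weight x)"] elem_props[OF wn] by simp
    then show "x \<in> A \<longleftrightarrow> weight x mod (k+1) = r" using r wn by simp
  qed
  then have "A = {x\<in>cube n. weight x mod (k+1) = r}" using sub by auto
  then show ?thesis using r by blast
qed

lemma mod_uniq:
  fixes h i j m :: nat
  assumes "i < m" "j < m" "(h+i) mod m = (h+j) mod m"
  shows "i = j"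
proof (rule ccontr)
  assume ne: "i \<noteq> j"
  { fix a b :: nat assume ab: "a < b" "b < m" "(h+a) mod m = (h+b) mod m"
    then have "m dvd (h+b) - (h+a)" using mod_eq_dvd_iff_nat[of "h+a" "h+b" m] by simp
    then have "m dvd b - a" by simp
    moreover have "0 < b - a" "b - a < m" using ab by auto
    ultimately have False using nat_dvd_not_less by blast }
  then show False using assms ne by (metis linorder_neqE_nat)
qed

lemma B_chain:
  assumes c: "is_chain n c" and L: "length c \<le> k+1"
    and ex: "\<exists>i<length c. (weight (hd c) + i) mod (k+1) = t"
  shows "card ({x\<in>cube n. weight x mod (k+1) = t} \<inter> set c) = 1"
proof -
  obtain i0 where i0: "i0 < length c" "(weight (hd c) + i0) mod (k+1) = t" using ex by blast
  have "{i. i < length c \<and> c!i \<in> {x\<in>cube n. weight x mod (k+1) = t}} = {i0}"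
  proof (rule set_eqI, rule iffI)
    fix i assume "i \<in> {i. i < length c \<and> c!i \<in> {x\<in>cube n. weight x mod (k+1) = t}}"
    then have "i < length c" "(weight (hd c) + i) mod (k+1) = t"
      using chain_weight[OF c] by auto
    then show "i \<in> {i0}" using mod_uniq[of i "k+1" i0 "weight (hd c)"] i0 L by auto
  qed (use i0 chain_weight[OF c] chain_in[OF c] in auto)
  then show ?thesis using card_inter_chain[OF c] by simp
qed

lemma B_fam:
  assumes u: "\<forall>h L. L \<ge> 1 \<longrightarrow> h + (h + L - 1) = n \<longrightarrow> h \<le> u \<and> u \<le> h + L - 1"
    and cC: "c \<in> chain_family n k"
  shows "card ({x\<in>cube n. weight x mod (k+1) = u mod (k+1)} \<inter> set c) = 1"
proof -
  have c: "is_chain n c" and L: "length c \<le> k+1"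
    using cC by (auto simp: chain_family_def symmetric_chain_def)
  define h where "h = weight (hd c)"
  have "\<exists>i<length c. (h + i) mod (k+1) = u mod (k+1)"
  proof (cases "length c = k+1")
    case True
    define i where "i = (u + k * h) mod (k+1)"
    have "(h + i) mod (k+1) = (h + (u + k*h)) mod (k+1)" unfolding i_def by (simp add: mod_add_right_eq)
    also have "h + (u + k*h) = u + (k+1)*h" by simp
    also have "(u + (k+1)*h) mod (k+1) = u mod (k+1)" by (metis mod_mult_self2 mult.commute)
    finally show ?thesis using True by (intro exI[of _ i]) (simp add: i_def)
  next
    case False
    then have s: "symmetric_chain n c" using cC by (auto simp: chain_family_def)
    then have hl: "h + (h + length c - 1) = n" "length c \<ge> 1"
      by (auto simp: symmetric_chain_def is_chain_def h_def Suc_le_eq)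
    then have "h \<le> u" "u \<le> h + length c - 1" using u by auto
    with hl(2) show ?thesis by (intro exI[of _ "u - h"]) auto
  qed
  then show ?thesis using B_chain[OF c L] by (simp add: h_def)
qed


lemma count:
  assumes fC: "finite C" and sub: "A \<subseteq> cube n"
    and one: "\<forall>x\<in>cube n. (\<Sum>c\<in>{c\<in>C. x \<in> set c}. w c) = (1::real)"
  shows "real (card A) = (\<Sum>c\<in>C. w c * real (card (A \<inter> set c)))"
proof -
  have fA: "finite A" using sub finite_cube finite_subset by blast
  have "real (card A) = (\<Sum>x\<in>A. (\<Sum>c\<in>{c\<in>C. x \<in> set c}. w c))"
  proof -
    have "(\<Sum>x\<in>A. (\<Sum>c\<in>{c\<in>C. x \<in> set c}. w c)) = (\<Sum>x\<in>A. 1)"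
      using one sub by (intro sum.cong) auto
    then show ?thesis by simp
  qed
  also have "\<dots> = (\<Sum>c\<in>C. \<Sum>x\<in>{x\<in>A. x \<in> set c}. w c)"
    by (rule sum.swap_restrict[OF fA fC])
  also have "\<dots> = (\<Sum>c\<in>C. w c * real (card (A \<inter> set c)))"
    by (rule sum.cong) (auto simp: Int_def mult.commute)
  finally show ?thesis .
qed

lemma adm_le1:
  assumes adm: "admissible n k A" and cC: "c \<in> chain_family n k"
  shows "card (A \<inter> set c) \<le> 1"
proof -
  have c: "is_chain n c" and L: "length c \<le> k+1"
    using cC by (auto simp: chain_family_def symmetric_chain_def)
  have key: "False" if ij: "i < j" "j < length c" "c!i \<in> A" "c!j \<in> A" for i j
  proof -
    have le: "\<forall>l<n. c!i!l \<le> c!j!l" using chain_le[OF c, of i j] ij by (simp del: le_boolE)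
    have len: "length (c!i) = n" "length (c!j) = n" using chain_in[OF c] ij by (auto simp: cube_def)
    have "weight (c!j) = weight (c!i) + (j - i)" using chain_weight[OF c] ij by simp
    then have "card {l. l < n \<and> c!i!l < c!j!l} = j - i" using le_weight[OF len le] by simp
    moreover have "c!i \<noteq> c!j" using chain_distinct[OF c] ij by (simp add: nth_eq_iff_index_eq)
    ultimately show False using adm ij le L unfolding admissible_def by fastforce
  qed
  have "card {i. i < length c \<and> c!i \<in> A} \<le> Suc 0"
  proof (rule card_le_Suc0_iff_eq[THEN iffD2])
    show "finite {i. i < length c \<and> c!i \<in> A}" by simp
    show "\<forall>a\<in>{i. i < length c \<and> c!i \<in> A}. \<forall>b\<in>{i. i < length c \<and> c!i \<in> A}. a = b"
      using key by (metis (mono_tags, lifting) linorder_neqE_nat mem_Collect_eq)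
  qed
  then show ?thesis using card_inter_chain[OF c] by simp
qed

lemma B_adm:
  assumes k1: "1 \<le> k"
  shows "admissible n k {x\<in>cube n. weight x mod (k+1) = t}"
  unfolding admissible_def
proof (intro conjI notI)
  show "{x\<in>cube n. weight x mod (k+1) = t} \<subseteq> cube n" by auto
next
  assume "\<exists>x\<in>{x\<in>cube n. weight x mod (k+1) = t}. \<exists>y\<in>{x\<in>cube n. weight x mod (k+1) = t}. x \<noteq> y \<and> (\<forall>i<n. x ! i \<le> y ! i) \<and> card {i. i < n \<and> x ! i < y ! i} \<le> k"
  then obtain x y where xy: "x \<in> cube n" "y \<in> cube n" "weight x mod (k+1) = t" "weight y mod (k+1) = t"
    "x \<noteq> y" "\<forall>i<n. x ! i \<le> y ! i" "card {i. i < n \<and> x ! i < y ! i} \<le> k" by blast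
  define d where "d = card {i. i < n \<and> x ! i < y ! i}"
  have len: "length x = n" "length y = n" using xy by (auto simp: cube_def)
  have w: "weight y = weight x + d" using le_weight[OF len xy(6)] d_def by simp
  have "d \<noteq> 0" using le_eq[OF len xy(6)] w xy(5) by auto
  moreover have "(k+1) dvd d"
    using xy(3,4) w mod_eq_dvd_iff_nat[of "weight x" "weight y" "k+1"] by simp
  ultimately have "d \<ge> k+1" by (simp add: dvd_imp_le)
  then show False using xy(7) d_def by simp
qed


lemma ucond_even: "even (n::nat) \<Longrightarrow> \<forall>h L. L \<ge> 1 \<longrightarrow> h + (h + L - 1) = n \<longrightarrow> h \<le> n div 2 \<and> n div 2 \<le> h + L - 1"
proof (intro allI impI)
  fix h L :: nat assume "even n" "L \<ge> 1" "h + (h + L - 1) = n"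
  then obtain q where "n = 2*q" "h + h + (L - 1) = n" by (auto elim: evenE)
  then show "h \<le> n div 2 \<and> n div 2 \<le> h + L - 1" using \<open>L \<ge> 1\<close> by linarith
qed
lemma ucond_odd1: "odd (n::nat) \<Longrightarrow> \<forall>h L. L \<ge> 1 \<longrightarrow> h + (h + L - 1) = n \<longrightarrow> h \<le> n div 2 \<and> n div 2 \<le> h + L - 1"
proof (intro allI impI)
  fix h L :: nat assume "odd n" "L \<ge> 1" "h + (h + L - 1) = n"
  then obtain q where "n = 2*q+1" "h + h + (L - 1) = n" by (auto elim: oddE)
  then show "h \<le> n div 2 \<and> n div 2 \<le> h + L - 1" using \<open>L \<ge> 1\<close> by linarith
qed
lemma ucond_odd2: "odd (n::nat) \<Longrightarrow> \<forall>h L. L \<ge> 1 \<longrightarrow> h + (h + L - 1) = n \<longrightarrow> h \<le> n div 2 + 1 \<and> n div 2 + 1 \<le> h + L - 1"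
proof (intro allI impI)
  fix h L :: nat assume "odd n" "L \<ge> 1" "h + (h + L - 1) = n"
  then obtain q where "n = 2*q+1" "h + h + (L - 1) = n" by (auto elim: oddE)
  moreover have "n div 2 = q" using \<open>n = 2*q+1\<close> by simp
  ultimately show "h \<le> n div 2 + 1 \<and> n div 2 + 1 \<le> h + L - 1" using \<open>L \<ge> 1\<close> by presburger
qed

lemma main:
  fixes w :: "bool list list \<Rightarrow> real"
  assumes k1: "1 \<le> k" and kn: "k \<le> n"
    and pos: "\<forall>c\<in>chain_family n k. w c > 0"
    and one: "\<forall>x\<in>cube n. (\<Sum>c\<in>{c\<in>chain_family n k. x \<in> set c}. w c) = 1"
  shows "\<And>u. \<forall>h L. L \<ge> 1 \<longrightarrow> h + (h + L - 1) = n \<longrightarrow> h \<le> u \<and> u \<le> h + L - 1 \<Longrightarrow>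
           real (card {x\<in>cube n. weight x mod (k+1) = u mod (k+1)}) = (\<Sum>c\<in>chain_family n k. w c)"
    and "\<And>A. admissible n k A \<Longrightarrow> real (card A) \<le> (\<Sum>c\<in>chain_family n k. w c)"
    and "\<And>A. admissible n k A \<Longrightarrow> real (card A) = (\<Sum>c\<in>chain_family n k. w c) \<Longrightarrow>
           \<forall>c\<in>chain_family n k. card (A \<inter> set c) = 1"
proof -
  let ?C = "chain_family n k"
  have fC: "finite ?C" by (rule finite_family)
  show "real (card {x\<in>cube n. weight x mod (k+1) = u mod (k+1)}) = (\<Sum>c\<in>?C. w c)"
    if u: "\<forall>h L. L \<ge> 1 \<longrightarrow> h + (h + L - 1) = n \<longrightarrow> h \<le> u \<and> u \<le> h + L - 1" for u
  proof -
    have "real (card {x\<in>cube n. weight x mod (k+1) = u mod (k+1)}) =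
      (\<Sum>c\<in>?C. w c * real (card ({x\<in>cube n. weight x mod (k+1) = u mod (k+1)} \<inter> set c)))"
      by (rule count[OF fC _ one]) auto
    also have "\<dots> = (\<Sum>c\<in>?C. w c)"
      by (rule sum.cong) (use B_fam[OF u] in auto)
    finally show ?thesis .
  qed
  show "real (card A) \<le> (\<Sum>c\<in>?C. w c)" if adm: "admissible n k A" for A
  proof -
    have sub: "A \<subseteq> cube n" using adm by (simp add: admissible_def)
    have "real (card A) = (\<Sum>c\<in>?C. w c * real (card (A \<inter> set c)))"
      by (rule count[OF fC sub one])
    also have "\<dots> \<le> (\<Sum>c\<in>?C. w c)"
    proof (rule sum_mono)
      fix c assume c: "c \<in> ?C"
      have "real (card (A \<inter> set c)) \<le> 1" using adm_le1[OF adm c] by simp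
      then show "w c * real (card (A \<inter> set c)) \<le> w c" using pos c
        by (simp add: mult_le_cancel_left1)
    qed
    finally show ?thesis .
  qed
  show "\<forall>c\<in>?C. card (A \<inter> set c) = 1"
    if adm: "admissible n k A" and eq: "real (card A) = (\<Sum>c\<in>?C. w c)" for A
  proof -
    have sub: "A \<subseteq> cube n" using adm by (simp add: admissible_def)
    have "real (card A) = (\<Sum>c\<in>?C. w c * real (card (A \<inter> set c)))"
      by (rule count[OF fC sub one])
    then have "(\<Sum>c\<in>?C. w c * (1 - real (card (A \<inter> set c)))) = 0"
      using eq by (simp add: algebra_simps sum_subtractf)
    moreover have nn: "\<forall>c\<in>?C. 0 \<le> w c * (1 - real (card (A \<inter> set c)))"
      using adm_le1[OF adm] pos by (simp add: less_imp_le)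
    ultimately have z: "\<forall>c\<in>?C. w c * (1 - real (card (A \<inter> set c))) = 0"
      using sum_nonneg_eq_0_iff[OF fC, of "\<lambda>c. w c * (1 - real (card (A \<inter> set c)))"] by simp
    show ?thesis
    proof
      fix c assume c: "c \<in> ?C"
      then have "w c \<noteq> 0" using pos by force
      then have "1 - real (card (A \<inter> set c)) = 0" using z[rule_format, OF c] by simp
      then show "card (A \<inter> set c) = 1" by simp
    qed
  qed
qed


lemma k1_case: "(k::nat) = 1 \<Longrightarrow> r \<le> k \<Longrightarrow> r = (q::nat) mod (k+1) \<or> r = (q + 1) mod (k+1)"
proof -
  assume k: "k = 1" and r: "r \<le> k"
  have k2: "k + 1 = 2" using k by simp
  show ?thesis
  proof (cases "even q")
    case True
    then have "q mod 2 = 0" "(q+1) mod 2 = 1" by presburger+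
    then show ?thesis unfolding k2 using r k by linarith
  next
    case False
    then have "q mod 2 = 1" "(q+1) mod 2 = 0" by presburger+
    then show ?thesis unfolding k2 using r k by linarith
  qed
qed

theorem lemma3p4:
  fixes n k :: nat
  assumes "1 \<le> k" and "k \<le> n"
    and "\<exists>w :: bool list list \<Rightarrow> real.
           (\<forall>c\<in>chain_family n k. w c > 0) \<and>
           (\<forall>x\<in>cube n. (\<Sum>c\<in>{c\<in>chain_family n k. x \<in> set c}. w c) = 1)"
  shows "(even n \<longrightarrow>
            (let B = {x\<in>cube n. weight x mod (k + 1) = (n div 2) mod (k + 1)} in
              admissible n k B \<and>
              (\<forall>A. admissible n k A \<longrightarrow> card A \<le> card B) \<and>
              (\<forall>A. admissible n k A \<and> card A = card B \<longrightarrow> A = B)))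
       \<and> (odd n \<longrightarrow>
            (let B1 = {x\<in>cube n. weight x mod (k + 1) = (n div 2) mod (k + 1)};
                 B2 = {x\<in>cube n. weight x mod (k + 1) = (n div 2 + 1) mod (k + 1)} in
              admissible n k B1 \<and> admissible n k B2 \<and>
              (\<forall>A. admissible n k A \<longrightarrow> card A \<le> card B1 \<and> card A \<le> card B2) \<and>
              (\<forall>A. admissible n k A \<and> (card A = card B1 \<or> card A = card B2)
                     \<longrightarrow> A = B1 \<or> A = B2)))"
proof -
  obtain w :: "bool list list \<Rightarrow> real" where pos: "\<forall>c\<in>chain_family n k. w c > 0"
    and one: "\<forall>x\<in>cube n. (\<Sum>c\<in>{c\<in>chain_family n k. x \<in> set c}. w c) = 1"
    using assms(3) by blast
  note M = main[OF assms(1,2) pos one]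
  define S where "S = (\<Sum>c\<in>chain_family n k. w c)"
  define B1 where "B1 = {x\<in>cube n. weight x mod (k + 1) = (n div 2) mod (k + 1)}"
  define B2 where "B2 = {x\<in>cube n. weight x mod (k + 1) = (n div 2 + 1) mod (k + 1)}"
  have adm1: "admissible n k B1" and adm2: "admissible n k B2"
    unfolding B1_def B2_def using B_adm[OF assms(1)] by auto
  have le: "real (card A) \<le> S" if "admissible n k A" for A using M(2)[OF that] S_def by simp
  have uniq: "\<exists>r\<le>k. A = {x\<in>cube n. weight x mod (k+1) = r}"
    and hit: "\<forall>c\<in>chain_family n k. card (A \<inter> set c) = 1"
    if "admissible n k A" "real (card A) = S" for A
  proof -
    show hit: "\<forall>c\<in>chain_family n k. card (A \<inter> set c) = 1" using M(3)[OF that(1)] that(2) S_def by simp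
    show "\<exists>r\<le>k. A = {x\<in>cube n. weight x mod (k+1) = r}"
      using struct[OF _ hit assms(2)] that(1) by (simp add: admissible_def)
  qed
  have hd2: "n div 2 \<le> n" by simp
  obtain e where e: "e \<in> cube n" "weight e = n div 2" using elem_props[OF hd2] by blast
  have even_part: "even n \<longrightarrow> (admissible n k B1 \<and>
              (\<forall>A. admissible n k A \<longrightarrow> card A \<le> card B1) \<and>
              (\<forall>A. admissible n k A \<and> card A = card B1 \<longrightarrow> A = B1))"
  proof
    assume ev: "even n"
    have cB: "real (card B1) = S" unfolding B1_def S_def by (rule M(1)[OF ucond_even[OF ev]])
    have "\<forall>A. admissible n k A \<longrightarrow> card A \<le> card B1"
    proof (intro allI impI)
      fix A assume "admissible n k A"
      then have "real (card A) \<le> real (card B1)" using le cB by simp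
      then show "card A \<le> card B1" by simp
    qed
    moreover have "A = B1" if A: "admissible n k A" "card A = card B1" for A
    proof -
      have rA: "real (card A) = S" using A cB by simp
      obtain r where r: "r \<le> k" "A = {x\<in>cube n. weight x mod (k+1) = r}" using uniq[OF A(1) rA] by blast
      have "[e] \<in> chain_family n k"
        using e ev assms(1) by (auto simp: chain_family_def symmetric_chain_def is_chain_def)
      then have "card (A \<inter> {e}) = 1" using hit[OF A(1) rA] by fastforce
      then have "e \<in> A" by (cases "e \<in> A") auto
      then have "r = (n div 2) mod (k+1)" using r e by simp
      then show "A = B1" using r B1_def by simp
    qed
    ultimately show "admissible n k B1 \<and>
              (\<forall>A. admissible n k A \<longrightarrow> card A \<le> card B1) \<and>
              (\<forall>A. admissible n k A \<and> card A = card B1 \<longrightarrow> A = B1)" using adm1 by blast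
  qed
  have odd_part: "odd n \<longrightarrow> (admissible n k B1 \<and> admissible n k B2 \<and>
              (\<forall>A. admissible n k A \<longrightarrow> card A \<le> card B1 \<and> card A \<le> card B2) \<and>
              (\<forall>A. admissible n k A \<and> (card A = card B1 \<or> card A = card B2)
                     \<longrightarrow> A = B1 \<or> A = B2))"
  proof
    assume od: "odd n"
    have cB1: "real (card B1) = S" unfolding B1_def S_def by (rule M(1)[OF ucond_odd1[OF od]])
    have cB2: "real (card B2) = S" unfolding B2_def S_def by (rule M(1)[OF ucond_odd2[OF od]])
    have "\<forall>A. admissible n k A \<longrightarrow> card A \<le> card B1 \<and> card A \<le> card B2"
    proof (intro allI impI)
      fix A assume "admissible n k A"
      then have "real (card A) \<le> real (card B1)" "real (card A) \<le> real (card B2)" using le cB1 cB2 by simp_all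
      then show "card A \<le> card B1 \<and> card A \<le> card B2" by simp
    qed
    moreover have "A = B1 \<or> A = B2" if A: "admissible n k A" "card A = card B1 \<or> card A = card B2" for A
    proof -
      have rA: "real (card A) = S" using A cB1 cB2 by auto
      obtain r where r: "r \<le> k" "A = {x\<in>cube n. weight x mod (k+1) = r}" using uniq[OF A(1) rA] by blast
      have "r = (n div 2) mod (k+1) \<or> r = (n div 2 + 1) mod (k+1)"
      proof (cases "k = 1")
        case True
        then show ?thesis using r(1) k1_case by blast
      next
        case False
        have "n div 2 + 1 \<le> n" using od by (cases n) auto
        then have "weight e + 1 \<le> n" using e by simp
        then obtain c where c: "is_chain n c" "length c = Suc 1" "hd c = e"
          using chain_up[OF e(1), of 1] by blast
        have "c \<in> chain_family n k"
        proof -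
          have "Suc (n div 2 + n div 2) = n" using odd_two_times_div_two_succ[OF od] by simp
          then show ?thesis using c e od False assms(1) by (auto simp: chain_family_def symmetric_chain_def)
        qed
        then have "card (A \<inter> set c) = 1" using hit[OF A(1) rA] by blast
        then have "card {i. i < length c \<and> c!i \<in> A} = 1" using card_inter_chain[OF c(1)] by simp
        then obtain i where i: "i < length c" "c!i \<in> A"
          by (cases "{i. i < length c \<and> c!i \<in> A} = {}") auto
        have "weight (c!i) = n div 2 + i" using chain_weight[OF c(1) i(1)] c e by simp
        then have "(n div 2 + i) mod (k+1) = r" using i r by simp
        moreover have "i = 0 \<or> i = 1" using i c by auto
        ultimately show ?thesis by auto
      qed
      then show ?thesis using r B1_def B2_def by auto
    qed
    ultimately show "admissible n k B1 \<and> admissible n k B2 \<and>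
              (\<forall>A. admissible n k A \<longrightarrow> card A \<le> card B1 \<and> card A \<le> card B2) \<and>
              (\<forall>A. admissible n k A \<and> (card A = card B1 \<or> card A = card B2)
                     \<longrightarrow> A = B1 \<or> A = B2)" using adm1 adm2 by blast
  qed
  show ?thesis using even_part odd_part unfolding Let_def B1_def B2_def by blast
qed

end
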